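(* Fix a monomial order on $S$. Let $J,E$ be ideals of $S$ and let $\mathcal G_J$ be a Gröbner basis of $J$. If $E$ is S-nice with respect to $\mathcal G_J$, then $(J,E)$ is a G-nice pair; more precisely, for every Gröbner basis $\mathcal G_E$ of $E$, $\mathcal G_E\cup\mathcal G_J$ is a Gröbner basis of $J+E$.
   Context: $K$ is a field and $S=K[x_1,\ldots,x_n]$ with a fixed monomial order. For $0\neq f\in S$, $\mathrm{in}(f)$ denotes its leading monomial and $\mathrm{LT}(f)$ its leading term; for an ideal $I$, $\mathrm{in}(I)$ is the ideal generated by the leading monomials of the nonzero elements of $I$. A pair $(J,E)$ of ideals is G-nice if $\mathrm{in}(J+E)=\mathrm{in}(J)+\mathrm{in}(E)$. For nonzero $f,g\in S$ the S-polynomial is $S(f,g)=\frac{\mathrm{lcm}(\mathrm{in}(f),\mathrm{in}(g))}{\mathrm{LT}(f)}f-\frac{\mathrm{lcm}(\mathrm{in}(f),\mathrm{in}(g))}{\mathrm{LT}(g)}g$. Given a Gröbner basis $\mathcal G_J$ of an ideal $J$, an ideal $E$ is called S-nice with respect to $\mathcal G_J$ if $S(f,g)\in E$ for all $f\in\mathcal G_J$ and all nonzero $g\in E$. *)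

theory Defs
  imports "HOL-Library.Poly_Mapping"
begin

text \<open>Polynomial ring S = K[x_v : v in 'v] over a field K, with a finite type 'v of
variables.\<close>

type_synonym ('v, 'a) mpoly = "('v \<Rightarrow>\<^sub>0 nat) \<Rightarrow>\<^sub>0 'a"

definition monomial_order :: "(('v \<Rightarrow>\<^sub>0 nat) \<Rightarrow> ('v \<Rightarrow>\<^sub>0 nat) \<Rightarrow> bool) \<Rightarrow> bool" where
  "monomial_order ord \<longleftrightarrow>
     (\<forall>a. ord a a) \<and>
     (\<forall>a b. ord a b \<and> ord b a \<longrightarrow> a = b) \<and>
     (\<forall>a b c. ord a b \<and> ord b c \<longrightarrow> ord a c) \<and>
     (\<forall>a b. ord a b \<or> ord b a) \<and>
     (\<forall>a. ord 0 a) \<and>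
     (\<forall>a b c. ord a b \<longrightarrow> ord (a + c) (b + c))"

definition lm :: "(('v \<Rightarrow>\<^sub>0 nat) \<Rightarrow> ('v \<Rightarrow>\<^sub>0 nat) \<Rightarrow> bool) \<Rightarrow> ('v, 'a::zero) mpoly \<Rightarrow> ('v \<Rightarrow>\<^sub>0 nat)" where
  "lm ord f = (THE m. m \<in> Poly_Mapping.keys f \<and> (\<forall>m'\<in>Poly_Mapping.keys f. ord m' m))"

definition lc :: "(('v \<Rightarrow>\<^sub>0 nat) \<Rightarrow> ('v \<Rightarrow>\<^sub>0 nat) \<Rightarrow> bool) \<Rightarrow> ('v, 'a::zero) mpoly \<Rightarrow> 'a" where
  "lc ord f = Poly_Mapping.lookup f (lm ord f)"

text \<open>in(f) as an element of S (the monic leading monomial).\<close>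
definition init :: "(('v \<Rightarrow>\<^sub>0 nat) \<Rightarrow> ('v \<Rightarrow>\<^sub>0 nat) \<Rightarrow> bool) \<Rightarrow> ('v, 'a::{zero,one}) mpoly \<Rightarrow> ('v, 'a) mpoly" where
  "init ord f = Poly_Mapping.single (lm ord f) 1"

definition LT :: "(('v \<Rightarrow>\<^sub>0 nat) \<Rightarrow> ('v \<Rightarrow>\<^sub>0 nat) \<Rightarrow> bool) \<Rightarrow> ('v, 'a::zero) mpoly \<Rightarrow> ('v, 'a) mpoly" where
  "LT ord f = Poly_Mapping.single (lm ord f) (lc ord f)"

definition is_ideal :: "'r::comm_ring_1 set \<Rightarrow> bool" where
  "is_ideal I \<longleftrightarrow> 0 \<in> I \<and> (\<forall>x\<in>I. \<forall>y\<in>I. x + y \<in> I) \<and> (\<forall>r. \<forall>x\<in>I. r * x \<in> I)"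

definition ideal_gen :: "'r::comm_ring_1 set \<Rightarrow> 'r set" where
  "ideal_gen G = \<Inter>{I. is_ideal I \<and> G \<subseteq> I}"

definition ideal_sum :: "'r::comm_ring_1 set \<Rightarrow> 'r set \<Rightarrow> 'r set" where
  "ideal_sum I J = {a + b | a b. a \<in> I \<and> b \<in> J}"

definition init_ideal :: "(('v \<Rightarrow>\<^sub>0 nat) \<Rightarrow> ('v \<Rightarrow>\<^sub>0 nat) \<Rightarrow> bool) \<Rightarrow> ('v, 'a::comm_ring_1) mpoly set \<Rightarrow> ('v, 'a) mpoly set" where
  "init_ideal ord I = ideal_gen {init ord f | f. f \<in> I \<and> f \<noteq> 0}"

definition groebner_basis :: "(('v \<Rightarrow>\<^sub>0 nat) \<Rightarrow> ('v \<Rightarrow>\<^sub>0 nat) \<Rightarrow> bool) \<Rightarrow> ('v, 'a::comm_ring_1) mpoly set \<Rightarrow> ('v, 'a) mpoly set \<Rightarrow> bool" where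
  "groebner_basis ord I G \<longleftrightarrow> finite G \<and> G \<subseteq> I - {0} \<and>
     init_ideal ord I = ideal_gen (init ord ` G)"

lift_definition mon_lcm :: "('v \<Rightarrow>\<^sub>0 nat) \<Rightarrow> ('v \<Rightarrow>\<^sub>0 nat) \<Rightarrow> ('v \<Rightarrow>\<^sub>0 nat)"
  is "\<lambda>a b x. max (a x) (b x)"
proof -
  fix a b :: "'v \<Rightarrow> nat"
  assume "finite {x. a x \<noteq> 0}" "finite {x. b x \<noteq> 0}"
  then have "finite ({x. a x \<noteq> 0} \<union> {x. b x \<noteq> 0})" by simp
  moreover have "{x. max (a x) (b x) \<noteq> 0} \<subseteq> {x. a x \<noteq> 0} \<union> {x. b x \<noteq> 0}" by auto
  ultimately show "finite {x. max (a x) (b x) \<noteq> 0}" by (rule finite_subset[rotated])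
qed

definition spoly :: "(('v \<Rightarrow>\<^sub>0 nat) \<Rightarrow> ('v \<Rightarrow>\<^sub>0 nat) \<Rightarrow> bool) \<Rightarrow> ('v, 'a::field) mpoly \<Rightarrow> ('v, 'a) mpoly \<Rightarrow> ('v, 'a) mpoly" where
  "spoly ord f g =
     (let L = mon_lcm (lm ord f) (lm ord g) in
       Poly_Mapping.single (L - lm ord f) (inverse (lc ord f)) * f
       - Poly_Mapping.single (L - lm ord g) (inverse (lc ord g)) * g)"

definition G_nice :: "(('v \<Rightarrow>\<^sub>0 nat) \<Rightarrow> ('v \<Rightarrow>\<^sub>0 nat) \<Rightarrow> bool) \<Rightarrow> ('v, 'a::comm_ring_1) mpoly set \<Rightarrow> ('v, 'a) mpoly set \<Rightarrow> bool" where
  "G_nice ord J E \<longleftrightarrow> init_ideal ord (ideal_sum J E) = ideal_sum (init_ideal ord J) (init_ideal ord E)"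

definition S_nice :: "(('v \<Rightarrow>\<^sub>0 nat) \<Rightarrow> ('v \<Rightarrow>\<^sub>0 nat) \<Rightarrow> bool) \<Rightarrow> ('v, 'a::field) mpoly set \<Rightarrow> ('v, 'a) mpoly set \<Rightarrow> bool" where
  "S_nice ord GJ E \<longleftrightarrow> (\<forall>f\<in>GJ. \<forall>g\<in>E. g \<noteq> 0 \<longrightarrow> spoly ord f g \<in> E)"

end

theory Submission imports Defs "HOL.Topological_Spaces" begin

lemma lookup_single_mult_shift:
  fixes c :: "'a::comm_semiring_1" and f :: "('v \<Rightarrow>\<^sub>0 nat) \<Rightarrow>\<^sub>0 'a"
  shows "Poly_Mapping.lookup (Poly_Mapping.single u c * f) (u + k) = c * Poly_Mapping.lookup f k"
proof -
  have "Poly_Mapping.lookup (Poly_Mapping.single u c * f) (u + k)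
     = (\<Sum>l. (c when u = l) * (\<Sum>q. Poly_Mapping.lookup f q when u + k = l + q))"
    by (simp add: lookup_mult lookup_single)
  also have "\<dots> = (\<Sum>l. (c * (\<Sum>q. Poly_Mapping.lookup f q when u + k = l + q)) when u = l)"
    by (simp add: when_mult)
  also have "\<dots> = c * (\<Sum>q. Poly_Mapping.lookup f q when u + k = u + q)"
    by simp
  also have "(\<Sum>q. Poly_Mapping.lookup f q when u + k = u + q) = (\<Sum>q. Poly_Mapping.lookup f q when q = k)"
    by (rule Sum_any.cong) (simp add: when_def)
  finally show ?thesis by simp
qed

lemma keys_single_mult_shift:
  "Poly_Mapping.keys (Poly_Mapping.single u c * f) \<subseteq> (\<lambda>k. u + k) ` Poly_Mapping.keys f"
  using keys_mult[of "Poly_Mapping.single u c" f] by (auto split: if_splits)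

section \<open>Orders\<close>

lemma mo_refl:
  assumes "monomial_order ord"  shows "ord a a"
proof -
  have "\<forall>a. ord a a" using assms(1) unfolding monomial_order_def by (elim conjE)
  then show ?thesis  by blast
qed
lemma mo_antisym:
  assumes "monomial_order ord" "ord a b" "ord b a" shows "a = b"
proof -
  have "\<forall>a b. ord a b \<and> ord b a \<longrightarrow> a = b" using assms(1) unfolding monomial_order_def by (elim conjE)
  then show ?thesis using assms(2,3) by blast
qed
lemma mo_trans:
  assumes "monomial_order ord" "ord a b" "ord b c" shows "ord a c"
proof -
  have "\<forall>a b c. ord a b \<and> ord b c \<longrightarrow> ord a c" using assms(1) unfolding monomial_order_def by (elim conjE)
  then show ?thesis using assms(2,3) by blast
qed
lemma mo_total:
  assumes "monomial_order ord"  shows "ord a b \<or> ord b a"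
proof -
  have "\<forall>a b. ord a b \<or> ord b a" using assms(1) unfolding monomial_order_def by (elim conjE)
  then show ?thesis  by blast
qed
lemma mo_zero:
  assumes "monomial_order ord"  shows "ord 0 a"
proof -
  have "\<forall>a. ord 0 a" using assms(1) unfolding monomial_order_def by (elim conjE)
  then show ?thesis  by blast
qed
lemma mo_add:
  assumes "monomial_order ord" "ord a b" shows "ord (a + c) (b + c)"
proof -
  have "\<forall>a b c. ord a b \<longrightarrow> ord (a + c) (b + c)" using assms(1) unfolding monomial_order_def by (elim conjE)
  then show ?thesis using assms(2) by blast
qed

lemma max_exists:
  assumes mo: "monomial_order ord" and "finite K" "K \<noteq> {}"
  shows "\<exists>m\<in>K. \<forall>m'\<in>K. ord m' m"
  using assms(2,3)
proof (induction K rule: finite_ne_induct)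
  case (singleton x) then show ?case using mo_refl[OF mo] by auto
next
  case (insert x F)
  then obtain m where m: "m \<in> F" "\<forall>m'\<in>F. ord m' m" by auto
  show ?case
  proof (cases "ord x m")
    case True then show ?thesis using m by auto
  next
    case False
    then have "ord m x" using mo_total[OF mo] by blast
    then show ?thesis using m mo_refl[OF mo] mo_trans[OF mo] by blast
  qed
qed

lemma keys_nonempty: "f \<noteq> 0 \<Longrightarrow> Poly_Mapping.keys f \<noteq> {}"
proof
  assume "f \<noteq> 0" "Poly_Mapping.keys f = {}"
  then have "\<And>k. Poly_Mapping.lookup f k = Poly_Mapping.lookup 0 k"
    by (simp add: in_keys_iff[symmetric])
  then have "f = 0" by (rule poly_mapping_eqI)
  then show False using \<open>f \<noteq> 0\<close> by simp
qed

lemma lm_eqI: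
  assumes mo: "monomial_order ord" and m: "m \<in> Poly_Mapping.keys f" "\<forall>k\<in>Poly_Mapping.keys f. ord k m"
  shows "lm ord f = m"
  unfolding lm_def
proof (rule the_equality)
  show "m \<in> Poly_Mapping.keys f \<and> (\<forall>m'\<in>Poly_Mapping.keys f. ord m' m)" using m by blast
next
  fix y assume y: "y \<in> Poly_Mapping.keys f \<and> (\<forall>m'\<in>Poly_Mapping.keys f. ord m' y)"
  then have "ord y m" "ord m y" using m by auto
  then show "y = m" by (rule mo_antisym[OF mo])
qed

lemma lm_props:
  assumes mo: "monomial_order ord" and "f \<noteq> 0"
  shows "lm ord f \<in> Poly_Mapping.keys f \<and> (\<forall>m'\<in>Poly_Mapping.keys f. ord m' (lm ord f))"
proof -
  obtain m where m: "m \<in> Poly_Mapping.keys f" "\<forall>m'\<in>Poly_Mapping.keys f. ord m' m"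
    using max_exists[OF mo finite_keys keys_nonempty[OF assms(2)]] by blast
  have "lm ord f = m" using lm_eqI[OF mo m] .
  then show ?thesis using m by simp
qed

lemma lc_nz:
  assumes mo: "monomial_order ord" and f: "f \<noteq> 0" shows "lc ord f \<noteq> 0"
proof -
  have "lm ord f \<in> Poly_Mapping.keys f" using lm_props[OF mo f] by blast
  then show ?thesis unfolding lc_def by (simp add: in_keys_iff)
qed

section \<open>Ideals\<close>

lemma ideal_gen_ideal: "is_ideal (ideal_gen G)"
  unfolding ideal_gen_def is_ideal_def by auto

lemma ideal_gen_sub: "G \<subseteq> ideal_gen G"
  unfolding ideal_gen_def by auto

lemma ideal_gen_min: "is_ideal I \<Longrightarrow> G \<subseteq> I \<Longrightarrow> ideal_gen G \<subseteq> I"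
  unfolding ideal_gen_def by auto

lemma ideal_gen_mono: "A \<subseteq> B \<Longrightarrow> ideal_gen A \<subseteq> ideal_gen B"
  unfolding ideal_gen_def by auto

lemma ideal_add: "is_ideal I \<Longrightarrow> x \<in> I \<Longrightarrow> y \<in> I \<Longrightarrow> x + y \<in> I"
  unfolding is_ideal_def by auto
lemma ideal_mult: "is_ideal I \<Longrightarrow> x \<in> I \<Longrightarrow> r * x \<in> I"
  unfolding is_ideal_def by auto
lemma ideal_zero: "is_ideal I \<Longrightarrow> 0 \<in> I"
  unfolding is_ideal_def by auto
lemma ideal_diff: "is_ideal I \<Longrightarrow> x \<in> I \<Longrightarrow> y \<in> I \<Longrightarrow> x - y \<in> I"
proof -
  assume I: "is_ideal I" "x \<in> I" "y \<in> I"
  have "(-1) * y \<in> I" using ideal_mult I by blast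
  then have "x + (-1) * y \<in> I" using ideal_add I by blast
  then show ?thesis by simp
qed

lemma ideal_sum_ideal:
  assumes "is_ideal I" "is_ideal J" shows "is_ideal (ideal_sum I J)"
  unfolding is_ideal_def ideal_sum_def
proof (intro conjI ballI allI)
  have "0 + 0 \<in> {a + b |a b. a \<in> I \<and> b \<in> J}" using assms ideal_zero by blast
  then show "0 \<in> {a + b |a b. a \<in> I \<and> b \<in> J}" by simp
next
  fix x y assume "x \<in> {a + b |a b. a \<in> I \<and> b \<in> J}" "y \<in> {a + b |a b. a \<in> I \<and> b \<in> J}"
  then obtain a b a' b' where "x = a + b" "y = a' + b'" "a \<in> I" "b \<in> J" "a' \<in> I" "b' \<in> J" by auto
  moreover have "x + y = (a + a') + (b + b')" using calculation by (simp add: algebra_simps)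
  ultimately show "x + y \<in> {a + b |a b. a \<in> I \<and> b \<in> J}" using assms ideal_add by blast
next
  fix r x assume "x \<in> {a + b |a b. a \<in> I \<and> b \<in> J}"
  then obtain a b where "x = a + b" "a \<in> I" "b \<in> J" by auto
  moreover have "r * x = r * a + r * b" using calculation by (simp add: algebra_simps)
  ultimately show "r * x \<in> {a + b |a b. a \<in> I \<and> b \<in> J}" using assms ideal_mult by blast
qed

lemma ideal_sum_left: "is_ideal J \<Longrightarrow> I \<subseteq> ideal_sum I J"
  unfolding ideal_sum_def using ideal_zero by force
lemma ideal_sum_right: "is_ideal I \<Longrightarrow> J \<subseteq> ideal_sum I J"
  unfolding ideal_sum_def using ideal_zero by force

lemma monideal_div:
  fixes G :: "('v, 'a::field) mpoly set"
  assumes "p \<in> ideal_gen (init ord ` G)" "k \<in> Poly_Mapping.keys p"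
  shows "\<exists>g\<in>G. \<exists>d. k = lm ord g + d"
proof -
  define D where "D = {p :: ('v, 'a) mpoly. \<forall>k\<in>Poly_Mapping.keys p. \<exists>g\<in>G. \<exists>d. k = lm ord g + d}"
  have "is_ideal D" unfolding is_ideal_def D_def
  proof (intro conjI ballI allI)
    fix x y :: "('v,'a) mpoly" and k
    assume x: "x \<in> {p. \<forall>k\<in>Poly_Mapping.keys p. \<exists>g\<in>G. \<exists>d. k = lm ord g + d}"
      and y: "y \<in> {p. \<forall>k\<in>Poly_Mapping.keys p. \<exists>g\<in>G. \<exists>d. k = lm ord g + d}"
    show "x + y \<in> {p. \<forall>k\<in>Poly_Mapping.keys p. \<exists>g\<in>G. \<exists>d. k = lm ord g + d}"
      using x y keys_add[of x y] by blast
  next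
    fix r x :: "('v,'a) mpoly"
    assume x: "x \<in> {p. \<forall>k\<in>Poly_Mapping.keys p. \<exists>g\<in>G. \<exists>d. k = lm ord g + d}"
    show "r * x \<in> {p. \<forall>k\<in>Poly_Mapping.keys p. \<exists>g\<in>G. \<exists>d. k = lm ord g + d}"
    proof (intro CollectI ballI)
      fix k assume "k \<in> Poly_Mapping.keys (r * x)"
      then obtain a b where "k = a + b" "b \<in> Poly_Mapping.keys x" using keys_mult by blast
      moreover then obtain g d where "g \<in> G" "b = lm ord g + d" using x by blast
      ultimately show "\<exists>g\<in>G. \<exists>d. k = lm ord g + d"
        by (metis add.commute add.assoc)
    qed
  qed simp
  moreover have "init ord ` G \<subseteq> D" unfolding D_def init_def
    by (auto; metis add.right_neutral)
  ultimately have "ideal_gen (init ord ` G) \<subseteq> D" by (rule ideal_gen_min)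
  then show ?thesis using assms unfolding D_def by blast
qed


section \<open>Dickson / well-foundedness\<close>

lemma nat_seq_mono_sub:
  fixes x :: "nat \<Rightarrow> nat"
  shows "\<exists>s::nat\<Rightarrow>nat. strict_mono s \<and> (\<forall>i j. i \<le> j \<longrightarrow> x (s i) \<le> x (s j))"
proof -
  obtain f where f: "strict_mono f" "monoseq (\<lambda>n. x (f n))" using seq_monosub by blast
  from f(2) consider (inc) "\<forall>m n. m \<le> n \<longrightarrow> x (f m) \<le> x (f n)"
    | (dec) "\<forall>m n. m \<le> n \<longrightarrow> x (f n) \<le> x (f m)" unfolding monoseq_def by blast
  then show ?thesis
  proof cases
    case inc then show ?thesis using f(1) by blast
  next
    case dec
    obtain N where N: "\<forall>n. x (f N) \<le> x (f n)"
      using ex_has_least_nat[of "\<lambda>n. True" 0 "\<lambda>n. x (f n)"] by blast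
    have "strict_mono (\<lambda>n. f (n + N))" using f(1) unfolding strict_mono_def by simp
    moreover have "\<forall>i j. i \<le> j \<longrightarrow> x (f (i + N)) \<le> x (f (j + N))"
    proof (intro allI impI)
      fix i j :: nat assume "i \<le> j"
      have "x (f (i + N)) \<le> x (f N)" using dec by simp
      also have "\<dots> \<le> x (f (j + N))" using N by simp
      finally show "x (f (i + N)) \<le> x (f (j + N))" .
    qed
    ultimately show ?thesis by blast
  qed
qed

lemma dickson_fin:
  fixes x :: "nat \<Rightarrow> 'v \<Rightarrow> nat"
  assumes "finite V"
  shows "\<exists>s::nat\<Rightarrow>nat. strict_mono s \<and> (\<forall>v\<in>V. \<forall>i j. i \<le> j \<longrightarrow> x (s i) v \<le> x (s j) v)"
  using assms
proof (induction V rule: finite_induct)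
  case empty
  show ?case by (intro exI[of _ "\<lambda>n::nat. n"]) (simp add: strict_mono_def)
next
  case (insert w V)
  from insert.IH obtain s :: "nat \<Rightarrow> nat" where s: "strict_mono s"
     "\<forall>v\<in>V. \<forall>i j. i \<le> j \<longrightarrow> x (s i) v \<le> x (s j) v" by (elim exE conjE)
  obtain t :: "nat \<Rightarrow> nat" where t: "strict_mono t" "\<forall>i j. i \<le> j \<longrightarrow> x (s (t i)) w \<le> x (s (t j)) w"
    using nat_seq_mono_sub[of "\<lambda>n. x (s n) w"] by (elim exE conjE)
  have "strict_mono (s \<circ> t)" using s(1) t(1) by (rule strict_mono_o)
  moreover have "\<forall>v\<in>insert w V. \<forall>i j::nat. i \<le> j \<longrightarrow> x ((s \<circ> t) i) v \<le> x ((s \<circ> t) j) v"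
  proof (intro ballI allI impI)
    fix v and i j :: nat assume v: "v \<in> insert w V" and ij: "i \<le> j"
    show "x ((s \<circ> t) i) v \<le> x ((s \<circ> t) j) v"
    proof (cases "v = w")
      case True
      have "x (s (t i)) w \<le> x (s (t j)) w" using t(2) ij by blast
      then show ?thesis using True by simp
    next
      case False
      then have vV: "v \<in> V" using v by simp
      have "t i \<le> t j" using t(1) ij by (simp add: strict_mono_less_eq)
      then have "x (s (t i)) v \<le> x (s (t j)) v" using s(2) vV by blast
      then show ?thesis by simp
    qed
  qed
  ultimately show ?case by (intro exI[of _ "s \<circ> t"] conjI)
qed

lemma mo_wf:
  fixes ord :: "('v::finite \<Rightarrow>\<^sub>0 nat) \<Rightarrow> ('v \<Rightarrow>\<^sub>0 nat) \<Rightarrow> bool"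
  assumes mo: "monomial_order ord"
  shows "wf {(a, b). ord a b \<and> a \<noteq> b}"
  unfolding wf_iff_no_infinite_down_chain
proof
  assume "\<exists>f. \<forall>i. (f (Suc i), f i) \<in> {(a, b). ord a b \<and> a \<noteq> b}"
  then obtain f where f: "\<And>i. ord (f (Suc i)) (f i) \<and> f (Suc i) \<noteq> f i" by auto
  have dec: "i < j \<Longrightarrow> ord (f j) (f i) \<and> f j \<noteq> f i" for i j
  proof (induction j)
    case 0 then show ?case by simp
  next
    case (Suc j)
    show ?case
    proof (cases "i = j")
      case True then show ?thesis using f by simp
    next
      case False
      then have "i < j" using Suc.prems by simp
      then have h: "ord (f j) (f i)" "f j \<noteq> f i" using Suc.IH by auto
      have o: "ord (f (Suc j)) (f i)" using f[of j] h mo_trans[OF mo] by blast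
      moreover have "f (Suc j) \<noteq> f i"
      proof
        assume "f (Suc j) = f i"
        then have "ord (f i) (f j)" using f[of j] by simp
        then show False using h mo_antisym[OF mo] by blast
      qed
      ultimately show ?thesis by blast
    qed
  qed
  obtain s :: "nat \<Rightarrow> nat" where s: "strict_mono s"
    "\<forall>v\<in>UNIV. \<forall>i j. i \<le> j \<longrightarrow> Poly_Mapping.lookup (f (s i)) v \<le> Poly_Mapping.lookup (f (s j)) v"
    using dickson_fin[of "UNIV :: 'v set" "\<lambda>n. Poly_Mapping.lookup (f n)"] by auto
  define d where "d = f (s 1) - f (s 0)"
  have eq: "f (s 1) = d + f (s 0)"
  proof (rule poly_mapping_eqI)
    fix k
    have "Poly_Mapping.lookup (f (s 0)) k \<le> Poly_Mapping.lookup (f (s 1)) k" using s(2) by simp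
    then show "Poly_Mapping.lookup (f (s 1)) k = Poly_Mapping.lookup (d + f (s 0)) k"
      unfolding d_def by (simp add: lookup_add lookup_minus)
  qed
  have "ord (0 + f (s 0)) (d + f (s 0))" using mo_add[OF mo mo_zero[OF mo]] .
  then have a: "ord (f (s 0)) (f (s 1))" using eq by simp
  have "s 0 < s 1" using s(1) by (simp add: strict_mono_def)
  then have "ord (f (s 1)) (f (s 0)) \<and> f (s 1) \<noteq> f (s 0)" by (rule dec)
  then show False using a mo_antisym[OF mo] by blast
qed


lemma lookup_mon_lcm: "Poly_Mapping.lookup (mon_lcm a b) x = max (Poly_Mapping.lookup a x) (Poly_Mapping.lookup b x)"
  by (simp add: mon_lcm.rep_eq)
lemma mon_lcm_dvd: "mon_lcm a (a + d) = a + d"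
proof (rule poly_mapping_eqI)
  fix k show "Poly_Mapping.lookup (mon_lcm a (a + d)) k = Poly_Mapping.lookup (a + d) k"
    unfolding lookup_mon_lcm lookup_add by (simp add: max_def)
qed
lemma init_ideal_mem:
  assumes "f \<in> I" "f \<noteq> 0" shows "init ord f \<in> init_ideal ord I"
proof -
  have "init ord f \<in> {init ord f | f. f \<in> I \<and> f \<noteq> 0}" using assms by blast
  then show ?thesis unfolding init_ideal_def using ideal_gen_sub by (rule subsetD[rotated])
qed

lemma core_step:
  fixes ord :: "('v::finite \<Rightarrow>\<^sub>0 nat) \<Rightarrow> ('v \<Rightarrow>\<^sub>0 nat) \<Rightarrow> bool"
    and J E GJ :: "('v, 'a::field) mpoly set"
  assumes mo: "monomial_order ord"
    and J: "is_ideal J" and E: "is_ideal E"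
    and GB: "groebner_basis ord J GJ"
    and SN: "S_nice ord GJ E"
  shows "\<forall>a b. a \<in> J \<longrightarrow> b \<in> E \<longrightarrow> a + b \<noteq> 0 \<longrightarrow> a \<noteq> 0 \<longrightarrow> lm ord a = m \<longrightarrow>
           (\<exists>x. (x \<in> J \<or> x \<in> E) \<and> x \<noteq> 0 \<and> lm ord x = lm ord (a + b))"
proof (induction m rule: wf_induct[OF mo_wf[OF mo]])
  case (1 m)
  show ?case
  proof (intro allI impI)
    fix a b assume a: "a \<in> J" and b: "b \<in> E" and h: "a + b \<noteq> 0" and a0: "a \<noteq> 0" and am: "lm ord a = m"
    have ka: "m \<in> Poly_Mapping.keys a" "\<forall>k\<in>Poly_Mapping.keys a. ord k m"
      using lm_props[OF mo a0] am by auto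
    have kh: "Poly_Mapping.keys (a + b) \<subseteq> Poly_Mapping.keys a \<union> Poly_Mapping.keys b" by (rule keys_add)
    show "\<exists>x. (x \<in> J \<or> x \<in> E) \<and> x \<noteq> 0 \<and> lm ord x = lm ord (a + b)"
    proof (cases "b = 0")
      case True then show ?thesis using a a0 by auto
    next
      case b0: False
      define mb where "mb = lm ord b"
      have kb: "mb \<in> Poly_Mapping.keys b" "\<forall>k\<in>Poly_Mapping.keys b. ord k mb"
        using lm_props[OF mo b0] mb_def by auto
      consider (lt) "ord mb m" "mb \<noteq> m" | (gt) "ord m mb" "mb \<noteq> m" | (eq) "mb = m"
        using mo_total[OF mo] by blast
      then show ?thesis
      proof cases
        case lt
        have "m \<notin> Poly_Mapping.keys b" using kb lt mo_antisym[OF mo] by blast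
        then have "Poly_Mapping.lookup (a + b) m \<noteq> 0" using ka(1)
          by (simp add: lookup_add in_keys_iff)
        then have "m \<in> Poly_Mapping.keys (a + b)" by (simp add: in_keys_iff)
        moreover have "\<forall>k\<in>Poly_Mapping.keys (a + b). ord k m"
        proof
          fix k assume "k \<in> Poly_Mapping.keys (a + b)"
          then have "k \<in> Poly_Mapping.keys a \<or> k \<in> Poly_Mapping.keys b" using kh by blast
          then show "ord k m"
          proof
            assume "k \<in> Poly_Mapping.keys b"
            then have "ord k mb" using kb by blast
            then show "ord k m" using lt(1) mo_trans[OF mo] by blast
          qed (use ka in blast)
        qed
        ultimately have "lm ord (a + b) = m" by (rule lm_eqI[OF mo])
        then show ?thesis using a a0 am by auto
      next
        case gt
        have "mb \<notin> Poly_Mapping.keys a" using ka gt mo_antisym[OF mo] by blast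
        then have "Poly_Mapping.lookup (a + b) mb \<noteq> 0" using kb(1)
          by (simp add: lookup_add in_keys_iff)
        then have "mb \<in> Poly_Mapping.keys (a + b)" by (simp add: in_keys_iff)
        moreover have "\<forall>k\<in>Poly_Mapping.keys (a + b). ord k mb"
        proof
          fix k assume "k \<in> Poly_Mapping.keys (a + b)"
          then have "k \<in> Poly_Mapping.keys a \<or> k \<in> Poly_Mapping.keys b" using kh by blast
          then show "ord k mb"
          proof
            assume "k \<in> Poly_Mapping.keys a"
            then have "ord k m" using ka by blast
            then show "ord k mb" using gt(1) mo_trans[OF mo] by blast
          qed (use kb in blast)
        qed
        ultimately have "lm ord (a + b) = mb" by (rule lm_eqI[OF mo])
        then show ?thesis using b b0 mb_def by auto
      next
        case eq
        show ?thesis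
        proof (cases "Poly_Mapping.lookup (a + b) m = 0")
          case False
          then have "m \<in> Poly_Mapping.keys (a + b)" by (simp add: in_keys_iff)
          moreover have "\<forall>k\<in>Poly_Mapping.keys (a + b). ord k m"
            using kh ka kb eq by blast
          ultimately have "lm ord (a + b) = m" by (rule lm_eqI[OF mo])
          then show ?thesis using a a0 am by auto
        next
          case cancel: True
          have "init ord a \<in> init_ideal ord J" using init_ideal_mem a a0 by blast
          then have ia: "init ord a \<in> ideal_gen (init ord ` GJ)" using GB unfolding groebner_basis_def by simp
          have "m \<in> Poly_Mapping.keys (init ord a)" unfolding init_def am by simp
          then obtain f d where f: "f \<in> GJ" and md: "m = lm ord f + d"
            using monideal_div[OF ia] by blast
          have fJ: "f \<in> J" and f0: "f \<noteq> 0" using f GB unfolding groebner_basis_def by auto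
          have lcf: "lc ord f \<noteq> 0" using lc_nz[OF mo f0] .
          have "spoly ord f b \<in> E" using SN f b b0 unfolding S_nice_def by blast
          moreover have "mon_lcm (lm ord f) (lm ord b) = m"
          proof -
            have "lm ord b = lm ord f + d" using eq mb_def md by simp
            then show ?thesis using md by (simp add: mon_lcm_dvd)
          qed
          moreover have "m - lm ord f = d" using md by simp
          ultimately have sp: "Poly_Mapping.single d (inverse (lc ord f)) * f
              - Poly_Mapping.single 0 (inverse (lc ord b)) * b \<in> E"
            unfolding spoly_def Let_def using eq mb_def by simp
          define q where "q = Poly_Mapping.single d (inverse (lc ord f)) * f"
          have "q = (Poly_Mapping.single d (inverse (lc ord f)) * f
              - Poly_Mapping.single 0 (inverse (lc ord b)) * b) + Poly_Mapping.single 0 (inverse (lc ord b)) * b"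
            unfolding q_def by simp
          moreover have "(Poly_Mapping.single d (inverse (lc ord f)) * f
              - Poly_Mapping.single 0 (inverse (lc ord b)) * b) + Poly_Mapping.single 0 (inverse (lc ord b)) * b \<in> E"
            by (rule ideal_add[OF E sp ideal_mult[OF E b]])
          ultimately have qE: "q \<in> E" by simp
          define p where "p = Poly_Mapping.single 0 (lc ord a) * q"
          have pE: "p \<in> E" unfolding p_def using ideal_mult[OF E qE] .
          have peq: "p = Poly_Mapping.single d (lc ord a * inverse (lc ord f)) * f"
            unfolding p_def q_def by (simp add: mult.assoc[symmetric] mult_single)
          have pJ: "p \<in> J" unfolding peq using ideal_mult[OF J fJ] .
          have kp: "\<forall>k\<in>Poly_Mapping.keys p. ord k m"
          proof
            fix k assume "k \<in> Poly_Mapping.keys p"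
            then obtain k' where k': "k' \<in> Poly_Mapping.keys f" "k = d + k'"
              using keys_single_mult_shift[of d _ f] unfolding peq by blast
            have "ord k' (lm ord f)" using lm_props[OF mo f0] k' by blast
            then have "ord (k' + d) (lm ord f + d)" by (rule mo_add[OF mo])
            then show "ord k m" using k' md by (simp add: add.commute)
          qed
          have lpm: "Poly_Mapping.lookup p m = lc ord a"
            unfolding peq md using lcf
            by (simp add: add.commute[of "lm ord f" d] lookup_single_mult_shift lc_def[of ord f, symmetric])
          define a' where "a' = a - p"
          define b' where "b' = b + p"
          have a'J: "a' \<in> J" unfolding a'_def using ideal_diff[OF J a pJ] .
          have b'E: "b' \<in> E" unfolding b'_def using ideal_add[OF E b pE] .
          have sum: "a' + b' = a + b" unfolding a'_def b'_def by simp
          show ?thesis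
          proof (cases "a' = 0")
            case True
            then have "b' = a + b" using sum by simp
            then show ?thesis using b'E h by auto
          next
            case a'0: False
            have ka': "Poly_Mapping.keys a' \<subseteq> Poly_Mapping.keys a \<union> Poly_Mapping.keys p"
              unfolding a'_def using keys_add[of a "- p"] by simp
            have "Poly_Mapping.lookup a' m = 0"
              unfolding a'_def using lpm am by (simp add: lookup_minus lc_def)
            moreover have lma: "lm ord a' \<in> Poly_Mapping.keys a'" using lm_props[OF mo a'0] by blast
            ultimately have "lm ord a' \<noteq> m" by (auto simp: in_keys_iff)
            moreover have "ord (lm ord a') m" using lma ka' ka kp by blast
            ultimately have "(lm ord a', m) \<in> {(a, b). ord a b \<and> a \<noteq> b}" by simp
            moreover have "a' + b' \<noteq> 0" using sum h by simp
            ultimately have "\<exists>x. (x \<in> J \<or> x \<in> E) \<and> x \<noteq> 0 \<and> lm ord x = lm ord (a' + b')"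
              using "1"[rule_format, of "lm ord a'" a' b'] a'J b'E a'0 by blast
            then show ?thesis using sum by simp
          qed
        qed
      qed
    qed
  qed
qed


lemma gb_parts:
  assumes "groebner_basis ord I G"
  shows "finite G" "G \<subseteq> I - {0}" "init_ideal ord I = ideal_gen (init ord ` G)"
  using assms by (simp_all add: groebner_basis_def)

lemma init_ideal_ideal: "is_ideal (init_ideal ord I)"
  unfolding init_ideal_def by (rule ideal_gen_ideal)

theorem mainTheorem14:
  fixes ord :: "('v::finite \<Rightarrow>\<^sub>0 nat) \<Rightarrow> ('v \<Rightarrow>\<^sub>0 nat) \<Rightarrow> bool"
    and J E GJ :: "('v, 'a::field) mpoly set"
  assumes "monomial_order ord"
    and "is_ideal J" and "is_ideal E"
    and "groebner_basis ord J GJ"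
    and "S_nice ord GJ E"
  shows "G_nice ord J E \<and>
    (\<forall>GE. groebner_basis ord E GE \<longrightarrow> groebner_basis ord (ideal_sum J E) (GE \<union> GJ))"
proof -
  note mo = assms(1) and J = assms(2) and E = assms(3) and GB = assms(4) and SN = assms(5)
  define H where "H = ideal_sum J E"
  have H: "is_ideal H" unfolding H_def by (rule ideal_sum_ideal[OF J E])
  have JH: "J \<subseteq> H" unfolding H_def by (rule ideal_sum_left[OF E])
  have EH: "E \<subseteq> H" unfolding H_def by (rule ideal_sum_right[OF J])
  have key: "\<exists>x. (x \<in> J \<or> x \<in> E) \<and> x \<noteq> 0 \<and> init ord x = init ord h"
    if h: "h \<in> H" "h \<noteq> 0" for h
  proof -
    obtain a b where ab: "h = a + b" "a \<in> J" "b \<in> E" using h(1) unfolding H_def ideal_sum_def by blast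
    show ?thesis
    proof (cases "a = 0")
      case True
      then have "b = h" using ab by simp
      then show ?thesis using ab h by blast
    next
      case False
      have ne: "a + b \<noteq> 0" using ab h by simp
      have "\<exists>x. (x \<in> J \<or> x \<in> E) \<and> x \<noteq> 0 \<and> lm ord x = lm ord (a + b)"
        using core_step[OF mo J E GB SN, of "lm ord a", rule_format, OF ab(2) ab(3) ne False refl] .
      then obtain x where x: "x \<in> J \<or> x \<in> E" "x \<noteq> 0" "lm ord x = lm ord (a + b)" by blast
      then have "init ord x = init ord h" unfolding init_def using ab by simp
      then show ?thesis using x by blast
    qed
  qed
  have monoJ: "init_ideal ord J \<subseteq> init_ideal ord H"
    unfolding init_ideal_def by (rule ideal_gen_mono) (use JH in blast)
  have monoE: "init_ideal ord E \<subseteq> init_ideal ord H"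
    unfolding init_ideal_def by (rule ideal_gen_mono) (use EH in blast)
  have gn: "G_nice ord J E"
    unfolding G_nice_def H_def[symmetric]
  proof
    show "init_ideal ord H \<subseteq> ideal_sum (init_ideal ord J) (init_ideal ord E)"
      unfolding init_ideal_def[of ord H]
    proof (rule ideal_gen_min[OF ideal_sum_ideal[OF init_ideal_ideal init_ideal_ideal]])
      show "{init ord f |f. f \<in> H \<and> f \<noteq> 0} \<subseteq> ideal_sum (init_ideal ord J) (init_ideal ord E)"
      proof
        fix g assume "g \<in> {init ord f |f. f \<in> H \<and> f \<noteq> 0}"
        then obtain h where h: "g = init ord h" "h \<in> H" "h \<noteq> 0" by blast
        then obtain x where x: "x \<in> J \<or> x \<in> E" "x \<noteq> 0" "init ord x = init ord h" using key by blast
        from x(1) show "g \<in> ideal_sum (init_ideal ord J) (init_ideal ord E)"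
        proof
          assume "x \<in> J"
          then have "init ord x \<in> init_ideal ord J" using x(2) by (rule init_ideal_mem)
          moreover have "init_ideal ord J \<subseteq> ideal_sum (init_ideal ord J) (init_ideal ord E)"
            by (rule ideal_sum_left[OF init_ideal_ideal])
          ultimately show ?thesis using h(1) x(3) by auto
        next
          assume "x \<in> E"
          then have "init ord x \<in> init_ideal ord E" using x(2) by (rule init_ideal_mem)
          moreover have "init_ideal ord E \<subseteq> ideal_sum (init_ideal ord J) (init_ideal ord E)"
            by (rule ideal_sum_right[OF init_ideal_ideal])
          ultimately show ?thesis using h(1) x(3) by auto
        qed
      qed
    qed
  next
    show "ideal_sum (init_ideal ord J) (init_ideal ord E) \<subseteq> init_ideal ord H"
    proof
      fix g assume "g \<in> ideal_sum (init_ideal ord J) (init_ideal ord E)"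
      then obtain u v where uv: "g = u + v" "u \<in> init_ideal ord J" "v \<in> init_ideal ord E"
        unfolding ideal_sum_def by blast
      have "u \<in> init_ideal ord H" using uv(2) monoJ by (rule subsetD[rotated])
      moreover have "v \<in> init_ideal ord H" using uv(3) monoE by (rule subsetD[rotated])
      ultimately have "u + v \<in> init_ideal ord H" by (rule ideal_add[OF init_ideal_ideal])
      then show "g \<in> init_ideal ord H" using uv(1) by simp
    qed
  qed
  have gb: "groebner_basis ord H (GE \<union> GJ)" if gE: "groebner_basis ord E GE" for GE
    unfolding groebner_basis_def
  proof (intro conjI)
    show "finite (GE \<union> GJ)" using gb_parts[OF gE] gb_parts[OF GB] by simp
    show "GE \<union> GJ \<subseteq> H - {0}" using gb_parts(2)[OF gE] gb_parts(2)[OF GB] JH EH by blast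
    show "init_ideal ord H = ideal_gen (init ord ` (GE \<union> GJ))"
    proof
      show "init_ideal ord H \<subseteq> ideal_gen (init ord ` (GE \<union> GJ))"
        unfolding init_ideal_def[of ord H]
      proof (rule ideal_gen_min[OF ideal_gen_ideal])
        show "{init ord f |f. f \<in> H \<and> f \<noteq> 0} \<subseteq> ideal_gen (init ord ` (GE \<union> GJ))"
        proof
          fix g assume "g \<in> {init ord f |f. f \<in> H \<and> f \<noteq> 0}"
          then obtain h where h: "g = init ord h" "h \<in> H" "h \<noteq> 0" by blast
          then obtain x where x: "x \<in> J \<or> x \<in> E" "x \<noteq> 0" "init ord x = init ord h" using key by blast
          have mJ: "ideal_gen (init ord ` GJ) \<subseteq> ideal_gen (init ord ` (GE \<union> GJ))"
            by (rule ideal_gen_mono) blast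
          have mE: "ideal_gen (init ord ` GE) \<subseteq> ideal_gen (init ord ` (GE \<union> GJ))"
            by (rule ideal_gen_mono) blast
          from x(1) show "g \<in> ideal_gen (init ord ` (GE \<union> GJ))"
          proof
            assume "x \<in> J"
            then have "init ord x \<in> init_ideal ord J" using x(2) by (rule init_ideal_mem)
            then have "init ord x \<in> ideal_gen (init ord ` GJ)" using gb_parts(3)[OF GB] by simp
            then show ?thesis using mJ h(1) x(3) by auto
          next
            assume "x \<in> E"
            then have "init ord x \<in> init_ideal ord E" using x(2) by (rule init_ideal_mem)
            then have "init ord x \<in> ideal_gen (init ord ` GE)" using gb_parts(3)[OF gE] by simp
            then show ?thesis using mE h(1) x(3) by auto
          qed
        qed
      qed
    next
      show "ideal_gen (init ord ` (GE \<union> GJ)) \<subseteq> init_ideal ord H"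
      proof (rule ideal_gen_min[OF init_ideal_ideal])
        show "init ord ` (GE \<union> GJ) \<subseteq> init_ideal ord H"
        proof
          fix g assume "g \<in> init ord ` (GE \<union> GJ)"
          then obtain f where f: "g = init ord f" "f \<in> GE \<union> GJ" by blast
          then have "f \<in> H" "f \<noteq> 0" using gb_parts(2)[OF gE] gb_parts(2)[OF GB] JH EH by blast+
          then show "g \<in> init_ideal ord H" using f(1) by (simp add: init_ideal_mem)
        qed
      qed
    qed
  qed
  show ?thesis using gn gb unfolding H_def by blast
qed

end
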